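(* Let $G$ be a graph that has a proper VPG-representation $R_V$ in a $w\times h$-grid in which every vertex-path is $xy^+$-monotone. Then every subgraph $G'$ of $G$ has an $xy^+$-monotone EPG-representation in a $(2w+h)\times 2h$-grid.
   Context: The $w\times h$-grid consists of all grid-points $(i,j)$ with integer coordinates $1\le i\le w$, $1\le j\le h$, and all grid-edges joining grid-points at distance $1$. A vertex-path is a path in the grid. An EPG-representation of a graph $G$ assigns to each vertex $v$ a vertex-path $\mathrm{path}(v)$ such that $(v,w)$ is an edge of $G$ if and only if $\mathrm{path}(v)$ and $\mathrm{path}(w)$ share a grid-edge. A VPG-representation of $G$ assigns to each vertex a vertex-path such that $(v,w)$ is an edge if and only if $\mathrm{path}(v)$ and $\mathrm{path}(w)$ share a grid-point. A VPG-representation is proper if (a) every grid-edge is used by at most one vertex-path, and (b) whenever a grid-point $p$ belongs to both $\mathrm{path}(v)$ and $\mathrm{path}(w)$ ($v\neq w$), one of these two vertex-paths contains the grid-edge going rightward from $p$ and the other contains the grid-edge going upward from $p$. A vertex-path is $x$-monotone if every vertical line meeting it meets it in a single interval; it is $xy$-monotone if additionally every horizontal line meeting it meets it in a single interval; it is $xy^+$-monotone if it is $xy$-monotone and its left endpoint is not above its right endpoint (i.e., it is monotonically increasing). An ($xy^+$-monotone) EPG-representation is one in which all vertex-paths are ($xy^+$-monotone). *)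

theory Defs
  imports "HOL-Analysis.Analysis"
begin

type_synonym gpoint = "int \<times> int"
type_synonym vpath = "gpoint list"

definition grid_point :: "nat \<Rightarrow> nat \<Rightarrow> gpoint \<Rightarrow> bool" where
  "grid_point w h p \<longleftrightarrow> 1 \<le> fst p \<and> fst p \<le> int w \<and> 1 \<le> snd p \<and> snd p \<le> int h"

definition adjacent :: "gpoint \<Rightarrow> gpoint \<Rightarrow> bool" where
  "adjacent p q \<longleftrightarrow> \<bar>fst p - fst q\<bar> + \<bar>snd p - snd q\<bar> = 1"

definition grid_path :: "nat \<Rightarrow> nat \<Rightarrow> vpath \<Rightarrow> bool" where
  "grid_path w h P \<longleftrightarrow> P \<noteq> [] \<and> distinct P \<and> (\<forall>p \<in> set P. grid_point w h p) \<and>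
     (\<forall>i. Suc i < length P \<longrightarrow> adjacent (P ! i) (P ! Suc i))"

definition path_edges :: "vpath \<Rightarrow> gpoint set set" where
  "path_edges P = {{P ! i, P ! Suc i} | i. Suc i < length P}"

definition rpt :: "gpoint \<Rightarrow> real \<times> real" where
  "rpt p = (real_of_int (fst p), real_of_int (snd p))"

definition path_trace :: "vpath \<Rightarrow> (real \<times> real) set" where
  "path_trace P = rpt ` set P \<union>
     (\<Union>i \<in> {i. Suc i < length P}. closed_segment (rpt (P ! i)) (rpt (P ! Suc i)))"

definition x_monotone :: "vpath \<Rightarrow> bool" where
  "x_monotone P \<longleftrightarrow> (\<forall>c::real. is_interval {y::real. (c, y) \<in> path_trace P})"

definition xy_monotone :: "vpath \<Rightarrow> bool" where
  "xy_monotone P \<longleftrightarrow> x_monotone P \<and> (\<forall>c::real. is_interval {x::real. (x, c) \<in> path_trace P})"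

definition xyp_monotone :: "vpath \<Rightarrow> bool" where
  "xyp_monotone P \<longleftrightarrow> xy_monotone P \<and>
     (\<forall>a \<in> {hd P, last P}. \<forall>b \<in> {hd P, last P}. fst a < fst b \<longrightarrow> snd a \<le> snd b)"

definition simple_graph :: "'v set \<Rightarrow> ('v \<times> 'v) set \<Rightarrow> bool" where
  "simple_graph V E \<longleftrightarrow> finite V \<and> E \<subseteq> V \<times> V \<and> sym E \<and> (\<forall>v. (v, v) \<notin> E)"

definition subgraph :: "'v set \<Rightarrow> ('v \<times> 'v) set \<Rightarrow> 'v set \<Rightarrow> ('v \<times> 'v) set \<Rightarrow> bool" where
  "subgraph V' E' V E \<longleftrightarrow> simple_graph V' E' \<and> V' \<subseteq> V \<and> E' \<subseteq> E"

definition EPG_rep :: "nat \<Rightarrow> nat \<Rightarrow> 'v set \<Rightarrow> ('v \<times> 'v) set \<Rightarrow> ('v \<Rightarrow> vpath) \<Rightarrow> bool" where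
  "EPG_rep w h V E R \<longleftrightarrow> (\<forall>v \<in> V. grid_path w h (R v)) \<and>
     (\<forall>u \<in> V. \<forall>v \<in> V. u \<noteq> v \<longrightarrow> ((u, v) \<in> E \<longleftrightarrow> path_edges (R u) \<inter> path_edges (R v) \<noteq> {}))"

definition VPG_rep :: "nat \<Rightarrow> nat \<Rightarrow> 'v set \<Rightarrow> ('v \<times> 'v) set \<Rightarrow> ('v \<Rightarrow> vpath) \<Rightarrow> bool" where
  "VPG_rep w h V E R \<longleftrightarrow> (\<forall>v \<in> V. grid_path w h (R v)) \<and>
     (\<forall>u \<in> V. \<forall>v \<in> V. u \<noteq> v \<longrightarrow> ((u, v) \<in> E \<longleftrightarrow> set (R u) \<inter> set (R v) \<noteq> {}))"

definition right_edge :: "gpoint \<Rightarrow> gpoint set" where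
  "right_edge p = {p, (fst p + 1, snd p)}"

definition up_edge :: "gpoint \<Rightarrow> gpoint set" where
  "up_edge p = {p, (fst p, snd p + 1)}"

definition proper_VPG_rep :: "nat \<Rightarrow> nat \<Rightarrow> 'v set \<Rightarrow> ('v \<times> 'v) set \<Rightarrow> ('v \<Rightarrow> vpath) \<Rightarrow> bool" where
  "proper_VPG_rep w h V E R \<longleftrightarrow> VPG_rep w h V E R \<and>
     (\<forall>u \<in> V. \<forall>v \<in> V. u \<noteq> v \<longrightarrow> path_edges (R u) \<inter> path_edges (R v) = {}) \<and>
     (\<forall>u \<in> V. \<forall>v \<in> V. u \<noteq> v \<longrightarrow> (\<forall>p \<in> set (R u) \<inter> set (R v).
        (right_edge p \<in> path_edges (R u) \<and> up_edge p \<in> path_edges (R v)) \<or>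
        (right_edge p \<in> path_edges (R v) \<and> up_edge p \<in> path_edges (R u))))"

end

theory Submission
  imports Defs
begin


definition RS :: "gpoint \<Rightarrow> gpoint \<Rightarrow> bool" where
  "RS p q \<longleftrightarrow> q = (fst p + 1, snd p) \<or> q = (fst p, snd p + 1)"

fun stair :: "vpath \<Rightarrow> bool" where
  "stair (p # q # P) = (RS p q \<and> stair (q # P))"
| "stair _ = True"

fun pe :: "vpath \<Rightarrow> gpoint set set" where
  "pe (p # q # P) = insert {p, q} (pe (q # P))"
| "pe _ = {}"

fun stp :: "vpath \<Rightarrow> (gpoint \<times> gpoint) set" where
  "stp (p # q # P) = insert (p, q) (stp (q # P))"
| "stp _ = {}"

lemma path_edges_Cons2: "path_edges (p # q # P) = insert {p, q} (path_edges (q # P))"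
  unfolding path_edges_def
proof (intro set_eqI iffI)
  fix e assume "e \<in> {{(p # q # P) ! i, (p # q # P) ! Suc i} |i. Suc i < length (p # q # P)}"
  then obtain i where "e = {(p # q # P) ! i, (p # q # P) ! Suc i}" "Suc i < length (p # q # P)" by blast
  then show "e \<in> insert {p, q} {{(q # P) ! i, (q # P) ! Suc i} |i. Suc i < length (q # P)}"
    by (cases i) auto
next
  fix e assume "e \<in> insert {p, q} {{(q # P) ! i, (q # P) ! Suc i} |i. Suc i < length (q # P)}"
  then show "e \<in> {{(p # q # P) ! i, (p # q # P) ! Suc i} |i. Suc i < length (p # q # P)}"
  proof
    assume "e = {p,q}" then show ?thesis by (intro CollectI exI[of _ 0]) auto
  next
    assume "e \<in> {{(q # P) ! i, (q # P) ! Suc i} |i. Suc i < length (q # P)}"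
    then obtain i where "e = {(q # P) ! i, (q # P) ! Suc i}" "Suc i < length (q # P)" by blast
    then show ?thesis by (intro CollectI exI[of _ "Suc i"]) auto
  qed
qed

lemma path_edges_single: "path_edges [p] = {}" "path_edges [] = {}"
  unfolding path_edges_def by auto

lemma path_edges_pe: "path_edges P = pe P"
  by (induction P rule: pe.induct) (auto simp: path_edges_Cons2 path_edges_single)

lemma path_trace_Cons2: "path_trace (p # q # P) = closed_segment (rpt p) (rpt q) \<union> path_trace (q # P)"
proof -
  have I: "{i. Suc i < length (p # q # P)} = insert 0 (Suc ` {i. Suc i < length (q # P)})"
    by (auto simp: image_iff) (metis Suc_less_eq less_Suc_eq_0_disj)
  have "rpt p \<in> closed_segment (rpt p) (rpt q)" by simp
  then show ?thesis unfolding path_trace_def I by auto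
qed

lemma path_trace_single: "path_trace [p] = {rpt p}"
  unfolding path_trace_def by auto

lemma stair_nth: "stair P \<longleftrightarrow> (\<forall>i. Suc i < length P \<longrightarrow> RS (P ! i) (P ! Suc i))"
proof (induction P rule: stair.induct)
  case (1 p q P)
  show ?case
  proof
    assume "stair (p # q # P)"
    then show "\<forall>i. Suc i < length (p # q # P) \<longrightarrow> RS ((p # q # P) ! i) ((p # q # P) ! Suc i)"
      using 1 by (auto simp: nth_Cons split: nat.splits)
  next
    assume H: "\<forall>i. Suc i < length (p # q # P) \<longrightarrow> RS ((p # q # P) ! i) ((p # q # P) ! Suc i)"
    have "RS p q" using H[rule_format, of 0] by simp
    moreover have "\<forall>i. Suc i < length (q # P) \<longrightarrow> RS ((q # P) ! i) ((q # P) ! Suc i)"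
      using H[rule_format, of "Suc _"] by auto
    ultimately show "stair (p # q # P)" using 1 by simp
  qed
qed auto

lemma stair_sum: "stair (p # P) \<Longrightarrow> z \<in> set P \<Longrightarrow> fst p + snd p < fst z + snd z"
proof (induction P arbitrary: p)
  case (Cons q P)
  then have "RS p q" "stair (q # P)" by auto
  then have "fst p + snd p < fst q + snd q" by (auto simp: RS_def)
  with Cons show ?case by fastforce
qed simp

lemma stair_distinct: "stair P \<Longrightarrow> distinct P"
proof (induction P)
  case (Cons p P)
  then have "stair P" by (cases P) auto
  moreover have "p \<notin> set P" using stair_sum[OF Cons.prems] by fastforce
  ultimately show ?case using Cons by simp
qed simp

lemma stair_ge: "stair (p # P) \<Longrightarrow> z \<in> set P \<Longrightarrow> fst p \<le> fst z \<and> snd p \<le> snd z"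
proof (induction P arbitrary: p)
  case (Cons q P)
  then have "RS p q" "stair (q # P)" by auto
  then have "fst p \<le> fst q \<and> snd p \<le> snd q" by (auto simp: RS_def)
  with Cons show ?case by fastforce
qed simp

lemma stair_tl: "stair (p # P) \<Longrightarrow> stair P"
  by (cases P) auto

lemma stp_RS: "stair P \<Longrightarrow> (a, b) \<in> stp P \<Longrightarrow> RS a b"
  by (induction P rule: stp.induct) auto

lemma stp_set: "(a, b) \<in> stp P \<Longrightarrow> a \<in> set P \<and> b \<in> set P"
  by (induction P rule: stp.induct) auto

lemma pe_stp: "pe P = (\<lambda>(a, b). {a, b}) ` stp P"
  by (induction P rule: stp.induct) auto

lemma RS_adjacent: "RS p q \<Longrightarrow> adjacent p q"
  by (auto simp: RS_def adjacent_def)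

lemma seg_H: "(z::real \<times> real) \<in> closed_segment (a, b) (a + 1, b) \<longleftrightarrow> snd z = b \<and> a \<le> fst z \<and> fst z \<le> a + 1"
proof
  assume "z \<in> closed_segment (a, b) (a + 1, b)"
  then obtain u where u: "0 \<le> u" "u \<le> 1" "z = (1 - u) *\<^sub>R (a, b) + u *\<^sub>R (a + 1, b)"
    unfolding closed_segment_def by blast
  then show "snd z = b \<and> a \<le> fst z \<and> fst z \<le> a + 1" by (auto simp: algebra_simps)
next
  assume H: "snd z = b \<and> a \<le> fst z \<and> fst z \<le> a + 1"
  show "z \<in> closed_segment (a, b) (a + 1, b)"
    unfolding closed_segment_def
  proof (intro CollectI exI conjI)
    show "z = (1 - (fst z - a)) *\<^sub>R (a, b) + (fst z - a) *\<^sub>R (a + 1, b)"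
      using H by (cases z) (auto simp: algebra_simps)
  qed (use H in auto)
qed

lemma seg_V: "(z::real \<times> real) \<in> closed_segment (a, b) (a, b + 1) \<longleftrightarrow> fst z = a \<and> b \<le> snd z \<and> snd z \<le> b + 1"
proof
  assume "z \<in> closed_segment (a, b) (a, b + 1)"
  then obtain u where u: "0 \<le> u" "u \<le> 1" "z = (1 - u) *\<^sub>R (a, b) + u *\<^sub>R (a, b + 1)"
    unfolding closed_segment_def by blast
  then show "fst z = a \<and> b \<le> snd z \<and> snd z \<le> b + 1" by (auto simp: algebra_simps)
next
  assume H: "fst z = a \<and> b \<le> snd z \<and> snd z \<le> b + 1"
  show "z \<in> closed_segment (a, b) (a, b + 1)"
    unfolding closed_segment_def
  proof (intro CollectI exI conjI)
    show "z = (1 - (snd z - b)) *\<^sub>R (a, b) + (snd z - b) *\<^sub>R (a, b + 1)"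
      using H by (cases z) (auto simp: algebra_simps)
  qed (use H in auto)
qed

lemma rpt_R: "rpt (fst p + 1, snd p) = (fst (rpt p) + 1, snd (rpt p))"
  by (simp add: rpt_def)
lemma rpt_U: "rpt (fst p, snd p + 1) = (fst (rpt p), snd (rpt p) + 1)"
  by (simp add: rpt_def)
lemma rpt_eta: "rpt p = (fst (rpt p), snd (rpt p))" by simp

lemma stair_bound: "stair (p # P) \<Longrightarrow> z \<in> path_trace (p # P) \<Longrightarrow> fst (rpt p) \<le> fst z \<and> snd (rpt p) \<le> snd z"
proof (induction P arbitrary: p z)
  case Nil then show ?case by (simp add: path_trace_single)
next
  case (Cons q P)
  then have R: "RS p q" and S: "stair (q # P)" by auto
  from Cons.prems(2) consider "z \<in> closed_segment (rpt p) (rpt q)" | "z \<in> path_trace (q # P)"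
    by (auto simp: path_trace_Cons2)
  then show ?case
  proof cases
    case 1
    then show ?thesis using R unfolding RS_def
      by (metis rpt_R rpt_U rpt_eta seg_H seg_V order_refl)
  next
    case 2
    with Cons.IH[OF S] have "fst (rpt q) \<le> fst z \<and> snd (rpt q) \<le> snd z" by blast
    moreover have "fst (rpt p) \<le> fst (rpt q) \<and> snd (rpt p) \<le> snd (rpt q)"
      using R by (auto simp: RS_def rpt_def)
    ultimately show ?thesis by linarith
  qed
qed

lemma interval_Un: "is_interval (A::real set) \<Longrightarrow> is_interval B \<Longrightarrow> m \<in> A \<Longrightarrow> m \<in> B \<Longrightarrow> is_interval (A \<union> B)"
  unfolding is_interval_1
  by (metis Un_iff linear)

lemma interval_sub1: "(S::real set) \<subseteq> {a} \<Longrightarrow> is_interval S"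
  unfolding is_interval_1 by (smt (verit) singletonD subsetD)

lemma rpt_in_trace: "rpt q \<in> path_trace (q # P)"
  unfolding path_trace_def by auto

lemma stair_xsec: "stair (p # P) \<Longrightarrow> is_interval {y. (c, y) \<in> path_trace (p # P)}"
proof (induction P arbitrary: p)
  case Nil
  show ?case by (rule interval_sub1[of _ "snd (rpt p)"]) (auto simp: path_trace_single, metis snd_conv)
next
  case (Cons q P)
  then have R: "RS p q" and S: "stair (q # P)" by auto
  have IH: "is_interval {y. (c, y) \<in> path_trace (q # P)}" using Cons.IH[OF S] .
  obtain a b where ab: "rpt p = (a, b)" by (cases "rpt p")
  have eq: "{y. (c, y) \<in> path_trace (p # q # P)} =
     {y. (c, y) \<in> closed_segment (rpt p) (rpt q)} \<union> {y. (c, y) \<in> path_trace (q # P)}"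
    by (auto simp: path_trace_Cons2)
  have bnd: "\<And>z. z \<in> path_trace (q # P) \<Longrightarrow> fst (rpt q) \<le> fst z \<and> snd (rpt q) \<le> snd z"
    using stair_bound[OF S] by blast
  have qin: "rpt q \<in> path_trace (q # P)" by (rule rpt_in_trace)
  from R consider "q = (fst p + 1, snd p)" | "q = (fst p, snd p + 1)" unfolding RS_def by blast
  then show ?case
  proof cases
    case 1
    then have rq: "rpt q = (a + 1, b)" using ab rpt_R[of p] by simp
    have seg: "{y. (c, y) \<in> closed_segment (rpt p) (rpt q)} = (if a \<le> c \<and> c \<le> a + 1 then {b} else {})"
      unfolding ab rq seg_H by auto
    show ?thesis
    proof (cases "c < a + 1")
      case True
      then have "{y. (c, y) \<in> path_trace (q # P)} = {}" using bnd rq by fastforce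
      then show ?thesis unfolding eq seg by (intro interval_sub1[of _ b]) auto
    next
      case False
      have "{y. (c, y) \<in> closed_segment (rpt p) (rpt q)} \<subseteq> {y. (c, y) \<in> path_trace (q # P)}"
        using False qin rq unfolding seg by auto
      then show ?thesis unfolding eq using IH by (simp add: Un_absorb1)
    qed
  next
    case 2
    then have rq: "rpt q = (a, b + 1)" using ab rpt_U[of p] by simp
    have seg: "{y. (c, y) \<in> closed_segment (rpt p) (rpt q)} = (if c = a then {b..b+1} else {})"
      unfolding ab rq seg_V by auto
    show ?thesis
    proof (cases "c = a")
      case True
      have "b + 1 \<in> {y. (c, y) \<in> path_trace (q # P)}" using qin rq True by simp
      then show ?thesis unfolding eq seg using True IH
        by (auto intro!: interval_Un[of _ _ "b+1"])
    next
      case False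
      then show ?thesis unfolding eq seg using IH by simp
    qed
  qed
qed

definition sw :: "gpoint \<Rightarrow> gpoint" where "sw p = (snd p, fst p)"
definition rsw :: "real \<times> real \<Rightarrow> real \<times> real" where "rsw p = (snd p, fst p)"

lemma rpt_sw: "rpt (sw p) = rsw (rpt p)" by (simp add: rpt_def sw_def rsw_def)

lemma seg_rsw: "closed_segment (rsw a) (rsw b) = rsw ` closed_segment a b"
proof -
  have "\<And>u. (1 - u) *\<^sub>R rsw a + u *\<^sub>R rsw b = rsw ((1 - u) *\<^sub>R a + u *\<^sub>R b)"
    by (simp add: rsw_def)
  then show ?thesis unfolding closed_segment_def by (auto simp: image_iff)
qed

lemma trace_sw: "path_trace (map sw P) = rsw ` path_trace P"
  by (induction P rule: pe.induct)
    (simp_all add: path_trace_Cons2 rpt_sw seg_rsw image_Un path_trace_single, simp add: path_trace_def)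

lemma stair_sw: "stair (map sw P) \<longleftrightarrow> stair P"
  by (induction P rule: pe.induct) (auto simp: RS_def sw_def prod_eq_iff)

lemma rsw_mem: "(a, b) \<in> rsw ` T \<longleftrightarrow> (b, a) \<in> T"
  by (auto simp: rsw_def image_iff) force

lemma stair_ends: "stair P \<Longrightarrow> P \<noteq> [] \<Longrightarrow> fst (hd P) \<le> fst (last P) \<and> snd (hd P) \<le> snd (last P)"
proof (cases P)
  case (Cons p P')
  assume S: "stair P"
  show ?thesis
  proof (cases "P' = []")
    case True then show ?thesis using Cons by simp
  next
    case False
    then have "last P \<in> set P'" using Cons by simp
    then show ?thesis using stair_ge[of p P' "last P"] S Cons by simp
  qed
qed simp

lemma stair_xyp: "stair P \<Longrightarrow> P \<noteq> [] \<Longrightarrow> xyp_monotone P"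
proof -
  assume S: "stair P" and ne: "P \<noteq> []"
  obtain p P' where P: "P = p # P'" using ne by (cases P) auto
  have x: "x_monotone P" unfolding x_monotone_def P using stair_xsec S P by blast
  have S2: "stair (sw p # map sw P')" using S P stair_sw[of P] by simp
  have y: "is_interval {x::real. (x, c) \<in> path_trace P}" for c
  proof -
    have "{x::real. (x, c) \<in> path_trace P} = {y. (c, y) \<in> path_trace (sw p # map sw P')}"
      using trace_sw[of P] P by (auto simp: rsw_mem)
    then show ?thesis using stair_xsec[OF S2] by simp
  qed
  have e: "fst (hd P) \<le> fst (last P) \<and> snd (hd P) \<le> snd (last P)" using stair_ends S ne by blast
  show ?thesis unfolding xyp_monotone_def xy_monotone_def using x y e by auto
qed

definition adjP :: "vpath \<Rightarrow> bool" where
  "adjP P \<longleftrightarrow> (\<forall>i. Suc i < length P \<longrightarrow> adjacent (P ! i) (P ! Suc i))"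

lemma seg_integ:
  assumes "adjacent a b" "z \<in> closed_segment (rpt a) (rpt b)"
  shows "fst z \<in> \<int> \<or> snd z \<in> \<int>"
proof -
  have "b = (fst a + 1, snd a) \<or> a = (fst b + 1, snd b) \<or> b = (fst a, snd a + 1) \<or> a = (fst b, snd b + 1)"
    using assms(1) unfolding adjacent_def by (auto simp: prod_eq_iff abs_if split: if_splits)
  then show ?thesis
  proof (elim disjE)
    assume "b = (fst a + 1, snd a)"
    then have "snd z = snd (rpt a)" using assms(2) rpt_R[of a] seg_H[of z "fst (rpt a)" "snd (rpt a)"] by simp
    then show ?thesis by (simp add: rpt_def)
  next
    assume "a = (fst b + 1, snd b)"
    then have "snd z = snd (rpt b)" using assms(2) rpt_R[of b] seg_H[of z "fst (rpt b)" "snd (rpt b)"]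
      by (simp add: closed_segment_commute)
    then show ?thesis by (simp add: rpt_def)
  next
    assume "b = (fst a, snd a + 1)"
    then have "fst z = fst (rpt a)" using assms(2) rpt_U[of a] seg_V[of z "fst (rpt a)" "snd (rpt a)"] by simp
    then show ?thesis by (simp add: rpt_def)
  next
    assume "a = (fst b, snd b + 1)"
    then have "fst z = fst (rpt b)" using assms(2) rpt_U[of b] seg_V[of z "fst (rpt b)" "snd (rpt b)"]
      by (simp add: closed_segment_commute)
    then show ?thesis by (simp add: rpt_def)
  qed
qed

lemma trace_integ:
  assumes A: "adjP P" and z: "z \<in> path_trace P" shows "fst z \<in> \<int> \<or> snd z \<in> \<int>"
proof -
  from z consider "z \<in> rpt ` set P" | i where "Suc i < length P" "z \<in> closed_segment (rpt (P ! i)) (rpt (P ! Suc i))"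
    unfolding path_trace_def by blast
  then show ?thesis
  proof cases
    case 1 then show ?thesis by (auto simp: rpt_def)
  next
    case 2 then show ?thesis using seg_integ A unfolding adjP_def by blast
  qed
qed

lemma seg_in_trace: "Suc i < length P \<Longrightarrow> closed_segment (rpt (P ! i)) (rpt (P ! Suc i)) \<subseteq> path_trace P"
  unfolding path_trace_def by auto

lemma half_not_int: "odd (k::int) \<Longrightarrow> (real_of_int k / 2) \<notin> \<int>"
proof
  assume o: "odd k" and "real_of_int k / 2 \<in> \<int>"
  then obtain n where "real_of_int k / 2 = real_of_int n" by (auto elim: Ints_cases)
  then have "k = 2 * n" by linarith
  with o show False by simp
qed

lemma opp_pair:
  fixes d :: "nat \<Rightarrow> int"
  assumes "\<forall>j. i \<le> j \<and> j \<le> k \<longrightarrow> d j \<in> {-1, 0, 1}" "d i \<noteq> 0" "d k = - d i" "i < k"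
  shows "\<exists>i' k'. i \<le> i' \<and> i' < k' \<and> k' \<le> k \<and> d i' \<noteq> 0 \<and> d k' = - d i' \<and> (\<forall>j. i' < j \<and> j < k' \<longrightarrow> d j = 0)"
  using assms
proof (induction "k - i" arbitrary: i k rule: less_induct)
  case less
  show ?case
  proof (cases "\<forall>j. i < j \<and> j < k \<longrightarrow> d j = 0")
    case True then show ?thesis using less.prems by blast
  next
    case False
    then obtain j where j: "i < j" "j < k" "d j \<noteq> 0" by blast
    have dj: "d j \<in> {-1, 0, 1}" "d i \<in> {-1,0,1}" using less.prems(1)[rule_format, of j] less.prems(1)[rule_format, of i] j by auto
    show ?thesis
    proof (cases "d j = d i")
      case True
      have "\<exists>i' k'. j \<le> i' \<and> i' < k' \<and> k' \<le> k \<and> d i' \<noteq> 0 \<and> d k' = - d i' \<and> (\<forall>j'. i' < j' \<and> j' < k' \<longrightarrow> d j' = 0)"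
        using less.hyps[of k j] less.prems j True by auto
      then show ?thesis using j by (meson order.strict_implies_order order_trans)
    next
      case False
      then have "d j = - d i" using dj j(3) less.prems(2) by auto
      then have "\<exists>i' k'. i \<le> i' \<and> i' < k' \<and> k' \<le> j \<and> d i' \<noteq> 0 \<and> d k' = - d i' \<and> (\<forall>j'. i' < j' \<and> j' < k' \<longrightarrow> d j' = 0)"
        using less.hyps[of j i] less.prems j by auto
      then show ?thesis using j by (meson order.strict_implies_order order_trans)
    qed
  qed
qed

lemma const_between:
  fixes f :: "nat \<Rightarrow> int"
  assumes "\<forall>j. a < j \<and> j < k \<longrightarrow> f (Suc j) = f j" "Suc a \<le> m" "m \<le> k"
  shows "f m = f (Suc a)"
  using assms(2,3)
proof (induction m rule: dec_induct)
  case base then show ?case by simp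
next
  case (step n)
  then show ?case using assms(1)[rule_format, of n] by simp
qed

lemma no_opp_x_ordered:
  assumes D: "distinct P" and A: "adjP P" and X: "x_monotone P"
    and ik: "i < k" "Suc k < length P"
    and di: "fst (P ! Suc i) - fst (P ! i) \<noteq> 0"
    and dk: "fst (P ! Suc k) - fst (P ! k) = - (fst (P ! Suc i) - fst (P ! i))"
    and btw: "\<forall>j. i < j \<and> j < k \<longrightarrow> fst (P ! Suc j) - fst (P ! j) = 0"
  shows False
proof -
  define a where "a = P ! i"
  define b where "b = P ! Suc i"
  define c where "c = P ! k"
  define e where "e = P ! Suc k"
  have adj: "adjacent a b" "adjacent c e" using A ik unfolding adjP_def a_def b_def c_def e_def by auto
  have ya: "snd b = snd a" using adj(1) di unfolding adjacent_def a_def b_def by auto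
  have ye: "snd e = snd c" using adj(2) dk di unfolding adjacent_def c_def e_def a_def b_def by auto
  have s1: "fst (b) - fst a = 1 \<or> fst b - fst a = -1" using adj(1) ya unfolding adjacent_def by auto
  have fc: "fst c = fst b"
    using const_between[of i k "\<lambda>j. fst (P ! j)" k] btw ik unfolding c_def b_def by auto
  have fe: "fst e = fst a" using dk fc unfolding a_def b_def c_def e_def by linarith
  have "e \<noteq> a" unfolding e_def a_def using D ik nth_eq_iff_index_eq[OF D, of "Suc k" i] by auto
  then have yne: "snd c \<noteq> snd a" using fe ye by (auto simp: prod_eq_iff)
  define m :: real where "m = (real_of_int (fst a) + real_of_int (fst b)) / 2"
  have mid1: "(m, real_of_int (snd a)) \<in> path_trace P"
  proof -
    have "midpoint (rpt a) (rpt b) = (m, real_of_int (snd a))"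
      using ya by (simp add: midpoint_def rpt_def m_def)
    then show ?thesis using seg_in_trace[of i P] ik midpoint_in_closed_segment[of "rpt a" "rpt b"]
      unfolding a_def b_def by auto
  qed
  have mid2: "(m, real_of_int (snd c)) \<in> path_trace P"
  proof -
    have "midpoint (rpt c) (rpt e) = (m, real_of_int (snd c))"
      using ye fc fe by (simp add: midpoint_def rpt_def m_def)
    then show ?thesis using seg_in_trace[of k P] ik midpoint_in_closed_segment[of "rpt c" "rpt e"]
      unfolding c_def e_def by auto
  qed
  define y :: real where "y = real_of_int (min (snd a) (snd c)) + 1/2"
  have "is_interval {y. (m, y) \<in> path_trace P}" using X unfolding x_monotone_def by blast
  then have "(m, y) \<in> path_trace P"
    unfolding is_interval_1 using mid1 mid2 yne
    apply (cases "snd a < snd c")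
    subgoal by (drule bspec[of _ _ "real_of_int (snd a)"], simp, drule bspec[of _ _ "real_of_int (snd c)"], simp,
         drule spec[of _ y]) (auto simp: y_def)
    subgoal by (drule bspec[of _ _ "real_of_int (snd c)"], simp, drule bspec[of _ _ "real_of_int (snd a)"], simp,
         drule spec[of _ y]) (auto simp: y_def)
    done
  then have "m \<in> \<int> \<or> y \<in> \<int>" using trace_integ[OF A] by fastforce
  moreover have "m \<notin> \<int>"
  proof -
    have meq: "m = real_of_int (fst a + fst b) / 2" by (simp add: m_def)
    have "odd (fst a + fst b)" using s1 by (auto simp: algebra_simps) presburger+
    then have "real_of_int (fst a + fst b) / 2 \<notin> \<int>" by (rule half_not_int)
    then show ?thesis unfolding meq .
  qed
  moreover have "y \<notin> \<int>"
  proof -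
    have yeq: "y = real_of_int (2 * min (snd a) (snd c) + 1) / 2" by (simp add: y_def)
    have "real_of_int (2 * min (snd a) (snd c) + 1) / 2 \<notin> \<int>" by (rule half_not_int) simp
    then show ?thesis unfolding yeq .
  qed
  ultimately show False by blast
qed


lemma adj_cases: "adjacent a b \<Longrightarrow>
  (fst b - fst a = 1 \<and> snd b - snd a = 0) \<or> (fst b - fst a = -1 \<and> snd b - snd a = 0) \<or>
  (fst b - fst a = 0 \<and> snd b - snd a = 1) \<or> (fst b - fst a = 0 \<and> snd b - snd a = -1)"
  unfolding adjacent_def by (auto simp: abs_if split: if_splits)

lemma no_opp_x:
  assumes D: "distinct P" and A: "adjP P" and X: "x_monotone P"
    and ik: "Suc i < length P" "Suc k < length P"
    and di: "fst (P ! Suc i) - fst (P ! i) \<noteq> 0"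
    and dk: "fst (P ! Suc k) - fst (P ! k) = - (fst (P ! Suc i) - fst (P ! i))"
  shows False
proof -
  define d where "d j = fst (P ! Suc j) - fst (P ! j)" for j
  have dv: "d j \<in> {-1, 0, 1}" if "Suc j < length P" for j
  proof -
    have "adjacent (P ! j) (P ! Suc j)" using A that unfolding adjP_def by blast
    from adj_cases[OF this] show ?thesis unfolding d_def by fastforce
  qed
  have main: False if m: "i' < k'" "Suc k' < length P" "d i' \<noteq> 0" "d k' = - d i'" for i' k'
  proof -
    obtain i2 k2 where ik2: "i' \<le> i2" "i2 < k2" "k2 \<le> k'" "d i2 \<noteq> 0" "d k2 = - d i2" "\<forall>j. i2 < j \<and> j < k2 \<longrightarrow> d j = 0"
    proof (rule opp_pair[of i' k' d, THEN exE], goal_cases)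
      case 1 show ?case
      proof (intro allI impI)
        fix j assume "i' \<le> j \<and> j \<le> k'"
        then have "Suc j < length P" using m(2) by linarith
        then show "d j \<in> {-1, 0, 1}" by (rule dv)
      qed
    next
      case 2 show ?case using m by simp
    next
      case 3 show ?case using m by simp
    next
      case 4 show ?case using m by simp
    next
      case (5 x) then show ?case by blast
    qed
    have "Suc k2 < length P" using ik2 m by linarith
    then show False
      using no_opp_x_ordered[OF D A X, of i2 k2] ik2 unfolding d_def by blast
  qed
  have di': "d i \<noteq> 0" using di unfolding d_def by simp
  have dk': "d k = - d i" using dk unfolding d_def by simp
  have "i \<noteq> k"
  proof
    assume "i = k"
    then have "d i = - d i" using dk' by simp
    then show False using di' by simp
  qed
  then consider "i < k" | "k < i" by linarith
  then show False
  proof cases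
    case 1 show False by (rule main[of i k]) (use 1 ik di' dk' in simp_all)
  next
    case 2 show False by (rule main[of k i]) (use 2 ik di' dk' in simp_all)
  qed
qed
lemma no_opp_y:
  assumes D: "distinct P" and A: "adjP P" and X: "xy_monotone P"
    and ik: "Suc i < length P" "Suc k < length P"
    and di: "snd (P ! Suc i) - snd (P ! i) \<noteq> 0"
    and dk: "snd (P ! Suc k) - snd (P ! k) = - (snd (P ! Suc i) - snd (P ! i))"
  shows False
proof -
  have D': "distinct (map sw P)" using D by (simp add: distinct_map inj_on_def sw_def prod_eq_iff)
  have A': "adjP (map sw P)" using A unfolding adjP_def adjacent_def sw_def by (auto simp: add.commute)
  have X': "x_monotone (map sw P)"
    unfolding x_monotone_def
  proof
    fix c :: real
    have "{y. (c, y) \<in> path_trace (map sw P)} = {y. (y, c) \<in> path_trace P}"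
      by (auto simp: trace_sw rsw_mem)
    then show "is_interval {y. (c, y) \<in> path_trace (map sw P)}"
      using X unfolding xy_monotone_def by simp
  qed
  show False by (rule no_opp_x[OF D' A' X', of i k]) (use ik di dk in \<open>auto simp: sw_def\<close>)
qed

lemma chain_le:
  fixes f :: "nat \<Rightarrow> int"
  assumes "\<forall>j. Suc j < n \<longrightarrow> f j \<le> f (Suc j)" "j \<le> k" "k < n"
  shows "f j \<le> f k"
  using assms(2,3)
proof (induction k rule: dec_induct)
  case (step m) then show ?case using assms(1)[rule_format, of m] by simp
qed simp

lemma chain_lt:
  fixes f :: "nat \<Rightarrow> int"
  assumes "\<forall>j. Suc j < n \<longrightarrow> f j \<le> f (Suc j)" "Suc i < n" "f i < f (Suc i)"
  shows "f 0 < f (n - 1)"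
proof -
  have "f 0 \<le> f i" using chain_le[OF assms(1), of 0 i] assms(2) by simp
  moreover have "f (Suc i) \<le> f (n - 1)" using chain_le[OF assms(1), of "Suc i" "n - 1"] assms(2) by simp
  ultimately show ?thesis using assms(3) by simp
qed


lemma classify:
  assumes G: "grid_path w h P" and M: "xyp_monotone P"
  shows "stair P \<or> stair (rev P)"
proof -
  define n where "n = length P"
  define dx where "dx j = fst (P ! Suc j) - fst (P ! j)" for j
  define dy where "dy j = snd (P ! Suc j) - snd (P ! j)" for j
  have D: "distinct P" and A: "adjP P" and ne: "P \<noteq> []" using G unfolding grid_path_def adjP_def by auto
  have XY: "xy_monotone P" and X: "x_monotone P" using M unfolding xyp_monotone_def xy_monotone_def by auto
  have nox: "\<And>i k. Suc i < n \<Longrightarrow> Suc k < n \<Longrightarrow> dx i \<noteq> 0 \<Longrightarrow> dx k \<noteq> - dx i"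
    using no_opp_x[OF D A X] unfolding dx_def n_def by blast
  have noy: "\<And>i k. Suc i < n \<Longrightarrow> Suc k < n \<Longrightarrow> dy i \<noteq> 0 \<Longrightarrow> dy k \<noteq> - dy i"
    using no_opp_y[OF D A XY] unfolding dy_def n_def by blast
  have st: "(dx j = 1 \<and> dy j = 0) \<or> (dx j = -1 \<and> dy j = 0) \<or> (dx j = 0 \<and> dy j = 1) \<or> (dx j = 0 \<and> dy j = -1)"
    if "Suc j < n" for j
    using adj_cases[of "P ! j" "P ! Suc j"] A that unfolding adjP_def dx_def dy_def n_def by auto
  have pos: "RS (P ! j) (P ! Suc j) \<longleftrightarrow> (dx j = 1 \<and> dy j = 0) \<or> (dx j = 0 \<and> dy j = 1)" for j
    unfolding RS_def dx_def dy_def by (auto simp: prod_eq_iff)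
  have neg: "RS (P ! Suc j) (P ! j) \<longleftrightarrow> (dx j = -1 \<and> dy j = 0) \<or> (dx j = 0 \<and> dy j = -1)" for j
    unfolding RS_def dx_def dy_def by (auto simp: prod_eq_iff)
  have hd: "hd P = P ! 0" and lst: "last P = P ! (n - 1)" using ne by (auto simp: hd_conv_nth last_conv_nth n_def)
  have ends: "\<forall>a \<in> {hd P, last P}. \<forall>b \<in> {hd P, last P}. fst a < fst b \<longrightarrow> snd a \<le> snd b"
    using M unfolding xyp_monotone_def by blast
  show ?thesis
  proof (cases "\<forall>j. Suc j < n \<longrightarrow> RS (P ! j) (P ! Suc j)")
    case True then show ?thesis unfolding stair_nth n_def by blast
  next
    case F1: False
    show ?thesis
    proof (cases "\<forall>j. Suc j < n \<longrightarrow> RS (P ! Suc j) (P ! j)")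
      case True
      have "stair (rev P)" unfolding stair_nth
      proof (intro allI impI)
        fix i assume i: "Suc i < length (rev P)"
        define j where "j = n - Suc (Suc i)"
        have j: "Suc j < n" "rev P ! i = P ! Suc j" "rev P ! Suc i = P ! j"
          using i by (auto simp: rev_nth j_def n_def Suc_diff_Suc)
        show "RS (rev P ! i) (rev P ! Suc i)" using True j by simp
      qed
      then show ?thesis by blast
    next
      case F2: False
      obtain k where k: "Suc k < n" "\<not> RS (P ! k) (P ! Suc k)" using F1 by blast
      obtain i where i: "Suc i < n" "\<not> RS (P ! Suc i) (P ! i)" using F2 by blast
      have kk: "(dx k = -1 \<and> dy k = 0) \<or> (dx k = 0 \<and> dy k = -1)" using st[OF k(1)] k(2) pos by auto
      have ii: "(dx i = 1 \<and> dy i = 0) \<or> (dx i = 0 \<and> dy i = 1)" using st[OF i(1)] i(2) neg by auto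
      from kk ii show ?thesis
      proof (elim disjE conjE)
        assume "dx k = -1" "dx i = 1" then show ?thesis using nox[OF i(1) k(1)] by simp
      next
        assume "dy k = -1" "dy i = 1" then show ?thesis using noy[OF i(1) k(1)] by simp
      next
        assume a: "dx k = -1" "dy k = 0" "dx i = 0" "dy i = 1"
        have "\<forall>j. Suc j < n \<longrightarrow> dx j \<le> 0"
        proof (intro allI impI)
          fix j assume j: "Suc j < n"
          have "dx j \<noteq> 1" using nox[OF k(1) j] a by simp
          then show "dx j \<le> 0" using st[OF j] by auto
        qed
        then have "\<forall>j. Suc j < n \<longrightarrow> (\<lambda>j. - fst (P ! j)) j \<le> (\<lambda>j. - fst (P ! j)) (Suc j)"
          unfolding dx_def by auto
        from chain_lt[OF this k(1)] a have f: "fst (P ! (n - 1)) < fst (P ! 0)" unfolding dx_def by simp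
        have "\<forall>j. Suc j < n \<longrightarrow> dy j \<ge> 0"
        proof (intro allI impI)
          fix j assume j: "Suc j < n"
          have "dy j \<noteq> -1" using noy[OF i(1) j] a by simp
          then show "dy j \<ge> 0" using st[OF j] by auto
        qed
        then have "\<forall>j. Suc j < n \<longrightarrow> (\<lambda>j. snd (P ! j)) j \<le> (\<lambda>j. snd (P ! j)) (Suc j)"
          unfolding dy_def by auto
        from chain_lt[OF this i(1)] a have g: "snd (P ! 0) < snd (P ! (n - 1))" unfolding dy_def by simp
        show ?thesis using ends f g unfolding hd lst by auto
      next
        assume a: "dx k = 0" "dy k = -1" "dx i = 1" "dy i = 0"
        have "\<forall>j. Suc j < n \<longrightarrow> dx j \<ge> 0"
        proof (intro allI impI)
          fix j assume j: "Suc j < n"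
          have "dx j \<noteq> -1" using nox[OF i(1) j] a by simp
          then show "dx j \<ge> 0" using st[OF j] by auto
        qed
        then have "\<forall>j. Suc j < n \<longrightarrow> (\<lambda>j. fst (P ! j)) j \<le> (\<lambda>j. fst (P ! j)) (Suc j)"
          unfolding dx_def by auto
        from chain_lt[OF this i(1)] a have f: "fst (P ! 0) < fst (P ! (n - 1))" unfolding dx_def by simp
        have "\<forall>j. Suc j < n \<longrightarrow> dy j \<le> 0"
        proof (intro allI impI)
          fix j assume j: "Suc j < n"
          have "dy j \<noteq> 1" using noy[OF k(1) j] a by simp
          then show "dy j \<le> 0" using st[OF j] by auto
        qed
        then have "\<forall>j. Suc j < n \<longrightarrow> (\<lambda>j. - snd (P ! j)) j \<le> (\<lambda>j. - snd (P ! j)) (Suc j)"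
          unfolding dy_def by auto
        from chain_lt[OF this k(1)] a have g: "snd (P ! (n - 1)) < snd (P ! 0)" unfolding dy_def by simp
        show ?thesis using ends f g unfolding hd lst by auto
      qed
    qed
  qed
qed


definition img :: "gpoint \<Rightarrow> gpoint" where
  "img p = (2 * fst p + snd p - 2, 2 * snd p - 1)"

definition mid :: "(gpoint \<Rightarrow> bool) \<Rightarrow> gpoint \<Rightarrow> gpoint \<Rightarrow> gpoint list" where
  "mid s p q = (if snd q = snd p then [(fst (img p) + 1, snd (img p))]
     else if s p then [(fst (img p) + 1, snd (img p)), (fst (img p) + 1, snd (img p) + 1)]
     else [(fst (img p), snd (img p) + 1), (fst (img p) + 1, snd (img p) + 1)])"

definition route :: "(gpoint \<Rightarrow> bool) \<Rightarrow> gpoint \<Rightarrow> gpoint \<Rightarrow> gpoint set set" where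
  "route s p q = pe (img p # mid s p q @ [img q])"

lemma route_H: "route s (a, b) (a + 1, b) =
  {{(2*a+b-2, 2*b-1), (2*a+b-1, 2*b-1)}, {(2*a+b-1, 2*b-1), (2*a+b, 2*b-1)}}"
  by (simp add: route_def mid_def img_def algebra_simps)

lemma route_V: "route s (a, b) (a, b + 1) = (if s (a, b) then
  {{(2*a+b-2, 2*b-1), (2*a+b-1, 2*b-1)}, {(2*a+b-1, 2*b-1), (2*a+b-1, 2*b)}, {(2*a+b-1, 2*b), (2*a+b-1, 2*b+1)}}
  else {{(2*a+b-2, 2*b-1), (2*a+b-2, 2*b)}, {(2*a+b-2, 2*b), (2*a+b-1, 2*b)}, {(2*a+b-1, 2*b), (2*a+b-1, 2*b+1)}})"
  by (simp add: route_def mid_def img_def algebra_simps)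

lemma route_disj:
  assumes "RS p q" "RS p' q'" "e \<in> route s p q" "e \<in> route s' p' q'"
  shows "p = p' \<and> (q = q' \<or> (q = (fst p + 1, snd p) \<and> q' = (fst p, snd p + 1) \<and> s' p)
     \<or> (q = (fst p, snd p + 1) \<and> q' = (fst p + 1, snd p) \<and> s p))"
proof -
  obtain a b where p: "p = (a, b)" by (cases p)
  obtain a' b' where p': "p' = (a', b')" by (cases p')
  show ?thesis
  using assms unfolding RS_def
  apply (elim disjE)
  apply (simp_all add: route_H route_V p p' split: if_splits)
  apply (auto simp: doubleton_eq_iff)
  apply presburger+
  done
qed


fun tr :: "(gpoint \<Rightarrow> bool) \<Rightarrow> vpath \<Rightarrow> vpath" where
  "tr s (p # q # P) = img p # mid s p q @ tr s (q # P)"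
| "tr s [p] = [img p]"
| "tr s [] = []"

lemma tr_hd: "\<exists>T. tr s (q # P) = img q # T"
  by (cases P) auto

lemma pe_app: "pe (x # xs @ y # T) = pe (x # xs @ [y]) \<union> pe (y # T)"
  by (induction xs arbitrary: x) auto

lemma stair_app: "stair (x # xs @ y # T) \<longleftrightarrow> stair (x # xs @ [y]) \<and> stair (y # T)"
  by (induction xs arbitrary: x) auto

lemma pe_tr: "pe (tr s P) = (\<Union>(p, q) \<in> stp P. route s p q)"
proof (induction s P rule: tr.induct)
  case (1 s p q P)
  obtain T where T: "tr s (q # P) = img q # T" using tr_hd by blast
  have "pe (tr s (p # q # P)) = pe (img p # mid s p q @ img q # T)" using T by simp
  also have "\<dots> = route s p q \<union> pe (img q # T)" unfolding route_def by (rule pe_app)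
  also have "pe (img q # T) = (\<Union>(p, q) \<in> stp (q # P). route s p q)" using 1 unfolding T .
  finally show ?case by simp
next
  case (2 s p) show ?case by simp
next
  case (3 s) show ?case by simp
qed

lemma RS_cases: "RS p q \<Longrightarrow> (\<And>a b. p = (a, b) \<Longrightarrow> q = (a + 1, b) \<Longrightarrow> thesis) \<Longrightarrow> (\<And>a b. p = (a, b) \<Longrightarrow> q = (a, b + 1) \<Longrightarrow> thesis) \<Longrightarrow> thesis"
  unfolding RS_def by (cases p) auto

lemma stair_route: "RS p q \<Longrightarrow> stair (img p # mid s p q @ [img q])"
  by (erule RS_cases) (auto simp: mid_def img_def RS_def algebra_simps)

lemma stair_tr: "stair P \<Longrightarrow> stair (tr s P)"
proof (induction s P rule: tr.induct)
  case (1 s p q P)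
  obtain T where T: "tr s (q # P) = img q # T" using tr_hd by blast
  have "stair (img p # mid s p q @ img q # T)"
    using stair_app[of "img p" "mid s p q" "img q" T] 1 T stair_route[of p q s] by simp
  then show ?case using T by simp
qed auto

lemma tr_ne: "P \<noteq> [] \<Longrightarrow> tr s P \<noteq> []"
  by (cases "(s, P)" rule: tr.cases) auto

lemma tr_bound: "z \<in> set (tr s P) \<Longrightarrow> \<exists>p \<in> set P. fst (img p) \<le> fst z \<and> fst z \<le> fst (img p) + 1 \<and>
   snd (img p) \<le> snd z \<and> snd z \<le> snd (img p) + 1"
proof (induction s P rule: tr.induct)
  case (1 s p q P)
  then consider "z = img p" | "z \<in> set (mid s p q)" | "z \<in> set (tr s (q # P))" by auto
  then show ?case
  proof cases
    case 1 then show ?thesis by auto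
  next
    case 2 then show ?thesis by (intro bexI[of _ p]) (auto simp: mid_def split: if_splits)
  next
    case 3 then show ?thesis using "1.IH" by auto
  qed
qed auto


lemma pe_snoc: "pe (P @ [x]) = (if P = [] then {} else insert {last P, x} (pe P))"
  by (induction P rule: pe.induct) auto

lemma pe_rev: "pe (rev P) = pe P"
proof (induction P rule: pe.induct)
  case (1 p q P)
  have "pe (rev (p # q # P)) = pe (rev (q # P) @ [p])" by simp
  also have "\<dots> = insert {q, p} (pe (rev (q # P)))"
  proof -
    have X: "pe (rev (q # P) @ [p]) = (if rev (q # P) = [] then {} else insert {last (rev (q # P)), p} (pe (rev (q # P))))"
      by (rule pe_snoc)
    have nn: "(rev (q # P) = []) = False" by simp
    have l: "last (rev (q # P)) = q" by simp
    from X show ?thesis unfolding nn l if_False .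
  qed
  also have "\<dots> = pe (p # q # P)" using 1 by (simp add: insert_commute doubleton_eq_iff)
  finally show ?case .
qed auto

lemma RS_edge_eq: "RS a b \<Longrightarrow> RS c d \<Longrightarrow> {a, b} = {c, d} \<Longrightarrow> a = c \<and> b = d"
  unfolding RS_def doubleton_eq_iff by (auto simp: prod_eq_iff)

lemma edge_stp: "stair Q \<Longrightarrow> RS p q \<Longrightarrow> {p, q} \<in> pe Q \<Longrightarrow> (p, q) \<in> stp Q"
proof -
  assume S: "stair Q" and R: "RS p q" and e: "{p, q} \<in> pe Q"
  then obtain a b where ab: "(a, b) \<in> stp Q" "{p, q} = {a, b}" unfolding pe_stp by auto
  have "RS a b" using stp_RS[OF S ab(1)] .
  then have "a = p \<and> b = q" using RS_edge_eq[OF _ R] ab(2) by metis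
  then show ?thesis using ab by simp
qed

lemma edge_set: "e \<in> path_edges P \<Longrightarrow> x \<in> e \<Longrightarrow> x \<in> set P"
  unfolding path_edges_def by auto

lemma e0_H: "{(2*a+b-2, 2*b-1), (2*a+b-1, 2*b-1)} \<in> route s (a, b) (a + 1, b)"
  by (simp add: route_H)

lemma e0_V: "s (a, b) \<Longrightarrow> {(2*a+b-2, 2*b-1), (2*a+b-1, 2*b-1)} \<in> route s (a, b) (a, b + 1)"
  by (simp add: route_V)

lemma RS_R: "RS p (fst p + 1, snd p)" and RS_U: "RS p (fst p, snd p + 1)"
  by (auto simp: RS_def)


theorem lemma2:
  fixes V :: "'v set" and E :: "('v \<times> 'v) set" and R :: "'v \<Rightarrow> vpath"
    and w h :: nat
  assumes "simple_graph V E"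
    and "proper_VPG_rep w h V E R"
    and "\<forall>v \<in> V. xyp_monotone (R v)"
  shows "\<forall>V' E'. subgraph V' E' V E \<longrightarrow>
           (\<exists>R'. EPG_rep (2 * w + h) (2 * h) V' E' R' \<and> (\<forall>v \<in> V'. xyp_monotone (R' v)))"
proof (intro allI impI)
  fix V' E' assume sub: "subgraph V' E' V E"
  have symE': "sym E'" and V'V: "V' \<subseteq> V" and E'E: "E' \<subseteq> E"
    using sub unfolding subgraph_def simple_graph_def by auto
  note A = assms(2)[unfolded proper_VPG_rep_def]
  note A2 = conjunct1[OF A]
  note DJ0 = conjunct1[OF conjunct2[OF A]]
  note PR0 = conjunct2[OF conjunct2[OF A]]
  note B = A2[unfolded VPG_rep_def]
  note GP0 = conjunct1[OF B]
  note VPG0 = conjunct2[OF B]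
  have GP: "\<And>v. v \<in> V \<Longrightarrow> grid_path w h (R v)" using GP0 by blast
  have VPG: "\<And>u v. u \<in> V \<Longrightarrow> v \<in> V \<Longrightarrow> u \<noteq> v \<Longrightarrow> (u, v) \<in> E \<longleftrightarrow> set (R u) \<inter> set (R v) \<noteq> {}"
    using VPG0 by blast
  have DJ: "\<And>u v. u \<in> V \<Longrightarrow> v \<in> V \<Longrightarrow> u \<noteq> v \<Longrightarrow> path_edges (R u) \<inter> path_edges (R v) = {}"
    using DJ0 by blast
  have PR: "\<And>u v p. u \<in> V \<Longrightarrow> v \<in> V \<Longrightarrow> u \<noteq> v \<Longrightarrow> p \<in> set (R u) \<Longrightarrow> p \<in> set (R v) \<Longrightarrow>
        (right_edge p \<in> path_edges (R u) \<and> up_edge p \<in> path_edges (R v)) \<or>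
        (right_edge p \<in> path_edges (R v) \<and> up_edge p \<in> path_edges (R u))"
  proof -
    fix u v p assume "u \<in> V" "v \<in> V" "u \<noteq> v" "p \<in> set (R u)" "p \<in> set (R v)"
    then show "(right_edge p \<in> path_edges (R u) \<and> up_edge p \<in> path_edges (R v)) \<or>
        (right_edge p \<in> path_edges (R v) \<and> up_edge p \<in> path_edges (R u))"
      using PR0 by blast
  qed
  define Q where "Q v = (if stair (R v) then R v else rev (R v))" for v
  have Qst: "stair (Q v)" if "v \<in> V" for v
    using classify[OF GP[OF that]] assms(3) that unfolding Q_def by auto
  have Qset: "set (Q v) = set (R v)" for v unfolding Q_def by simp
  have Qpe: "pe (Q v) = path_edges (R v)" for v unfolding Q_def by (simp add: pe_rev path_edges_pe)
  have Qne: "Q v \<noteq> []" if "v \<in> V" for v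
    using GP[OF that] unfolding Q_def grid_path_def by simp
  define sh where "sh v p \<longleftrightarrow> (\<exists>u \<in> V'. u \<noteq> v \<and> (u, v) \<in> E' \<and> p \<in> set (R u))" for v p
  define R' where "R' v = tr (sh v) (Q v)" for v
  have R'st: "stair (R' v)" if "v \<in> V" for v unfolding R'_def using stair_tr Qst[OF that] by blast
  have R'pe: "path_edges (R' v) = (\<Union>(p, q) \<in> stp (Q v). route (sh v) p q)" for v
    unfolding R'_def path_edges_pe by (rule pe_tr)
  have grid: "grid_path (2 * w + h) (2 * h) (R' v)" if v: "v \<in> V" for v
  proof -
    have ne: "R' v \<noteq> []" unfolding R'_def using tr_ne Qne[OF v] by blast
    have dist: "distinct (R' v)" using stair_distinct R'st[OF v] by blast
    have adj: "\<forall>i. Suc i < length (R' v) \<longrightarrow> adjacent (R' v ! i) (R' v ! Suc i)"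
      using R'st[OF v] unfolding stair_nth using RS_adjacent by blast
    have gp: "grid_point (2 * w + h) (2 * h) z" if z: "z \<in> set (R' v)" for z
    proof -
      obtain p where p: "p \<in> set (Q v)" "fst (img p) \<le> fst z" "fst z \<le> fst (img p) + 1"
        "snd (img p) \<le> snd z" "snd z \<le> snd (img p) + 1"
        using tr_bound z unfolding R'_def by blast
      have "grid_point w h p" using GP[OF v] p(1) unfolding Qset grid_path_def by blast
      then show ?thesis using p unfolding grid_point_def img_def by auto
    qed
    show ?thesis unfolding grid_path_def using ne dist adj gp by blast
  qed
  have key: "(u, v) \<in> E'" if uv: "u \<in> V'" "v \<in> V'" "u \<noteq> v"
      and re: "right_edge a \<in> path_edges (R u)" and ue: "up_edge a \<in> path_edges (R v)" and s: "sh v a" for u v a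
  proof -
    obtain u' where u': "u' \<in> V'" "u' \<noteq> v" "(u', v) \<in> E'" "a \<in> set (R u')" using s unfolding sh_def by blast
    have au: "a \<in> set (R u)" using edge_set[OF re] unfolding right_edge_def by blast
    show ?thesis
    proof (cases "u' = u")
      case True then show ?thesis using u' by simp
    next
      case False
      have "u \<in> V" "u' \<in> V" "v \<in> V" using uv u' V'V by auto
      from PR[OF \<open>u \<in> V\<close> \<open>u' \<in> V\<close> False[symmetric] au u'(4)] show ?thesis
      proof (elim disjE conjE)
        assume "up_edge a \<in> path_edges (R u')"
        then have "up_edge a \<in> path_edges (R u') \<inter> path_edges (R v)" using ue by blast
        then show ?thesis using DJ[OF \<open>u' \<in> V\<close> \<open>v \<in> V\<close> u'(2)] by blast
      next
        assume "right_edge a \<in> path_edges (R u')"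
        then have "right_edge a \<in> path_edges (R u) \<inter> path_edges (R u')" using re by blast
        then show ?thesis using DJ[OF \<open>u \<in> V\<close> \<open>u' \<in> V\<close> False[symmetric]] by blast
      qed
    qed
  qed
  have epg: "(u, v) \<in> E' \<longleftrightarrow> path_edges (R' u) \<inter> path_edges (R' v) \<noteq> {}"
    if uv: "u \<in> V'" "v \<in> V'" "u \<noteq> v" for u v
  proof
    have uV: "u \<in> V" and vV: "v \<in> V" using uv V'V by auto
    assume "(u, v) \<in> E'"
    then have "(u, v) \<in> E" "(v, u) \<in> E'" using E'E symE' by (auto dest: symD)
    then obtain p where p: "p \<in> set (R u)" "p \<in> set (R v)" using VPG[OF uV vV uv(3)] by blast
    obtain a b where ab: "p = (a, b)" by (cases p)
    have "\<exists>x. x \<in> path_edges (R' u) \<and> x \<in> path_edges (R' v)"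
    using PR[OF uV vV uv(3) p]
    proof (elim disjE conjE)
      assume re: "right_edge p \<in> path_edges (R u)" and ue: "up_edge p \<in> path_edges (R v)"
      have s1: "(p, (a + 1, b)) \<in> stp (Q u)"
        using edge_stp[OF Qst[OF uV] RS_R[of p]] re unfolding Qpe right_edge_def ab by simp
      have s2: "(p, (a, b + 1)) \<in> stp (Q v)"
        using edge_stp[OF Qst[OF vV] RS_U[of p]] ue unfolding Qpe up_edge_def ab by simp
      have sh: "sh v (a, b)" unfolding sh_def using uv \<open>(u, v) \<in> E'\<close> p ab by blast
      show ?thesis
        using e0_H[of a b "sh u"] e0_V[of "sh v" a b, OF sh] s1 s2 unfolding R'pe ab by blast
    next
      assume re: "right_edge p \<in> path_edges (R v)" and ue: "up_edge p \<in> path_edges (R u)"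
      have s1: "(p, (a + 1, b)) \<in> stp (Q v)"
        using edge_stp[OF Qst[OF vV] RS_R[of p]] re unfolding Qpe right_edge_def ab by simp
      have s2: "(p, (a, b + 1)) \<in> stp (Q u)"
        using edge_stp[OF Qst[OF uV] RS_U[of p]] ue unfolding Qpe up_edge_def ab by simp
      have sh: "sh u (a, b)" unfolding sh_def using uv \<open>(v, u) \<in> E'\<close> p ab by (intro bexI[of _ v]) auto
      show ?thesis
        using e0_H[of a b "sh v"] e0_V[of "sh u" a b, OF sh] s1 s2 unfolding R'pe ab by blast
    qed
    then show "path_edges (R' u) \<inter> path_edges (R' v) \<noteq> {}" by blast
  next
    have uV: "u \<in> V" and vV: "v \<in> V" using uv V'V by auto
    assume "path_edges (R' u) \<inter> path_edges (R' v) \<noteq> {}"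
    then obtain e a b a' b' where e: "(a, b) \<in> stp (Q u)" "e \<in> route (sh u) a b"
        "(a', b') \<in> stp (Q v)" "e \<in> route (sh v) a' b'"
      unfolding R'pe by blast
    have RS1: "RS a b" and RS2: "RS a' b'" using stp_RS Qst uV vV e by blast+
    have E1: "{a, b} \<in> path_edges (R u)" using e(1) unfolding Qpe[symmetric] pe_stp by blast
    have E2: "{a', b'} \<in> path_edges (R v)" using e(3) unfolding Qpe[symmetric] pe_stp by blast
    from route_disj[OF RS1 RS2 e(2) e(4)] have aa: "a = a'" and
      cs: "b = b' \<or> (b = (fst a + 1, snd a) \<and> b' = (fst a, snd a + 1) \<and> sh v a)
     \<or> (b = (fst a, snd a + 1) \<and> b' = (fst a + 1, snd a) \<and> sh u a)" by blast+
    from cs show "(u, v) \<in> E'"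
    proof (elim disjE conjE)
      assume "b = b'"
      then have "{a, b} \<in> path_edges (R u) \<inter> path_edges (R v)" using E1 E2 aa by simp
      then show ?thesis using DJ[OF uV vV uv(3)] by blast
    next
      assume b: "b = (fst a + 1, snd a)" "b' = (fst a, snd a + 1)" "sh v a"
      show ?thesis
        by (rule key[OF uv _ _ b(3)]) (use E1 E2 aa b in \<open>simp_all add: right_edge_def up_edge_def\<close>)
    next
      assume b: "b = (fst a, snd a + 1)" "b' = (fst a + 1, snd a)" "sh u a"
      have "(v, u) \<in> E'"
        by (rule key[OF uv(2,1) uv(3)[symmetric] _ _ b(3)]) (use E1 E2 aa b in \<open>simp_all add: right_edge_def up_edge_def\<close>)
      then show ?thesis using symE' by (auto dest: symD)
    qed
  qed
  show "\<exists>R'. EPG_rep (2 * w + h) (2 * h) V' E' R' \<and> (\<forall>v \<in> V'. xyp_monotone (R' v))"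
  proof (intro exI conjI)
    show "EPG_rep (2 * w + h) (2 * h) V' E' R'"
      unfolding EPG_rep_def using grid V'V epg by blast
    show "\<forall>v \<in> V'. xyp_monotone (R' v)"
      using stair_xyp R'st grid V'V unfolding grid_path_def by blast
  qed
qed


end
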